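(* Let $\Gamma$ be a geometry of type $C_3$ in which two distinct coplanar lines through a common point lie in a unique common plane. Let $\alpha=(p,L,q,M,p)$ be a non-degenerate primitive path, $N$ a line admissible for $\alpha$, and $r$ a point of $N$. Then: (1) $\sigma^N_{q\to r}(\alpha)=\alpha$ if and only if $r=q$; (2) $\sigma^N_{q\to r}(\alpha)$ is a non-degenerate primitive path and $N$ is admissible for it; (3) $\sigma^N_{r\to q}(\sigma^N_{q\to r}(\alpha))=\alpha$; (4) $\alpha\sim\sigma^N_{q\to r}(\alpha)$.
   Context: A geometry of type $C_3$ is a (residually connected) rank-3 Tits geometry belonging to the diagram $\circ\!-\!\circ\!=\!\circ$, with types points, lines, planes; the residue of a plane is a projective plane on its points and lines. Paths, homotopy $\sim$: generated by $(x,y,x)\leftrightarrow(x)$ and $(x,y,z)\leftrightarrow(x,z)$ for flags $\{x,y,z\}$. A primitive path is a closed path $(p,L,q,M,p)$ with $p,q$ points and $L,M$ lines; degenerate if $p=q$ or $L=M$. Shift: given a non-degenerate primitive path $\alpha=(p,L,q,M,p)$ (so $L,M$ are not coplanar), a line $N$ is admissible for $\alpha$ if $N$ is incident with $q$ and is coplanar with $L$ and with $M$. For a point $r$ on $N$, let $\xi$ be the plane on $N$ and $L$, $\chi$ the plane on $N$ and $M$, $L'$ the line of $\xi$ through $p$ and $r$, $M'$ the line of $\chi$ through $p$ and $r$; the shift of $\alpha$ from $q$ to $r$ along $N$ is $\sigma^N_{q\to r}(\alpha)=(p,L',r,M',p)$. *)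

theory Defs
  imports Main
begin

datatype eltype = Point | Line | Plane

definition incidence_geometry :: "('e \<Rightarrow> eltype) \<Rightarrow> ('e \<Rightarrow> 'e \<Rightarrow> bool) \<Rightarrow> bool" where
  "incidence_geometry tp I \<longleftrightarrow>
     (\<forall>x. I x x) \<and> (\<forall>x y. I x y \<longrightarrow> I y x) \<and>
     (\<forall>x y. I x y \<and> tp x = tp y \<longrightarrow> x = y) \<and>
     (\<forall>t. \<exists>x. tp x = t)"

definition is_flag :: "('e \<Rightarrow> 'e \<Rightarrow> bool) \<Rightarrow> 'e set \<Rightarrow> bool" where
  "is_flag I F \<longleftrightarrow> (\<forall>x\<in>F. \<forall>y\<in>F. I x y)"

definition residue :: "('e \<Rightarrow> eltype) \<Rightarrow> ('e \<Rightarrow> 'e \<Rightarrow> bool) \<Rightarrow> 'e set \<Rightarrow> 'e set" where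
  "residue tp I F = {x. tp x \<notin> tp ` F \<and> (\<forall>y\<in>F. I x y)}"

definition adj :: "('e \<Rightarrow> 'e \<Rightarrow> bool) \<Rightarrow> 'e \<Rightarrow> 'e \<Rightarrow> bool" where
  "adj I x y \<longleftrightarrow> I x y \<and> x \<noteq> y"

definition walk_in :: "('e \<Rightarrow> 'e \<Rightarrow> bool) \<Rightarrow> 'e set \<Rightarrow> 'e list \<Rightarrow> bool" where
  "walk_in I V xs \<longleftrightarrow> xs \<noteq> [] \<and> set xs \<subseteq> V \<and>
     (\<forall>i. Suc i < length xs \<longrightarrow> adj I (xs ! i) (xs ! Suc i))"

definition connected_in :: "('e \<Rightarrow> 'e \<Rightarrow> bool) \<Rightarrow> 'e set \<Rightarrow> bool" where
  "connected_in I V \<longleftrightarrow>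
     (\<forall>x\<in>V. \<forall>y\<in>V. \<exists>xs. walk_in I V xs \<and> hd xs = x \<and> last xs = y)"

definition cycle_in :: "('e \<Rightarrow> 'e \<Rightarrow> bool) \<Rightarrow> 'e set \<Rightarrow> 'e list \<Rightarrow> bool" where
  "cycle_in I V xs \<longleftrightarrow> walk_in I V xs \<and> distinct xs \<and> length xs \<ge> 3 \<and>
     adj I (last xs) (hd xs)"

text \<open>Generalized n-gon (in the sense of Tits): the incidence graph has diameter at most n,
has no cycle of length less than 2n, and is firm (every vertex has at least two neighbours).\<close>
definition generalized_ngon :: "nat \<Rightarrow> ('e \<Rightarrow> 'e \<Rightarrow> bool) \<Rightarrow> 'e set \<Rightarrow> bool" where
  "generalized_ngon n I V \<longleftrightarrow>
     (\<forall>x\<in>V. \<forall>y\<in>V. \<exists>xs. walk_in I V xs \<and> hd xs = x \<and> last xs = y \<and> length xs \<le> n + 1) \<and>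
     (\<forall>xs. cycle_in I V xs \<longrightarrow> length xs \<ge> 2 * n) \<and>
     (\<forall>x\<in>V. \<exists>y z. y \<in> V \<and> z \<in> V \<and> y \<noteq> z \<and> adj I x y \<and> adj I x z)"

definition projective_plane :: "('e \<Rightarrow> 'e \<Rightarrow> bool) \<Rightarrow> 'e set \<Rightarrow> 'e set \<Rightarrow> bool" where
  "projective_plane I P Ls \<longleftrightarrow>
     (\<forall>a\<in>P. \<forall>b\<in>P. a \<noteq> b \<longrightarrow> (\<exists>!l. l \<in> Ls \<and> I a l \<and> I b l)) \<and>
     (\<forall>l\<in>Ls. \<forall>m\<in>Ls. l \<noteq> m \<longrightarrow> (\<exists>!a. a \<in> P \<and> I a l \<and> I a m)) \<and>
     (\<exists>a b c d. {a, b, c, d} \<subseteq> P \<and> card {a, b, c, d} = 4 \<and>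
        (\<forall>x\<in>{a, b, c, d}. \<forall>y\<in>{a, b, c, d}. \<forall>z\<in>{a, b, c, d}.
           card {x, y, z} = 3 \<longrightarrow> \<not> (\<exists>l\<in>Ls. I x l \<and> I y l \<and> I z l)))"

definition residually_connected :: "('e \<Rightarrow> eltype) \<Rightarrow> ('e \<Rightarrow> 'e \<Rightarrow> bool) \<Rightarrow> bool" where
  "residually_connected tp I \<longleftrightarrow>
     (\<forall>F. is_flag I F \<and> finite F \<and> card (tp ` F) \<le> 1 \<longrightarrow> connected_in I (residue tp I F)) \<and>
     (\<forall>F. is_flag I F \<and> finite F \<and> card (tp ` F) = 2 \<longrightarrow> residue tp I F \<noteq> {})"

definition C3_geometry :: "('e \<Rightarrow> eltype) \<Rightarrow> ('e \<Rightarrow> 'e \<Rightarrow> bool) \<Rightarrow> bool" where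
  "C3_geometry tp I \<longleftrightarrow>
     incidence_geometry tp I \<and> residually_connected tp I \<and>
     (\<forall>\<xi>. tp \<xi> = Plane \<longrightarrow>
        projective_plane I {x. tp x = Point \<and> I x \<xi>} {x. tp x = Line \<and> I x \<xi>}) \<and>
     (\<forall>p. tp p = Point \<longrightarrow> generalized_ngon 4 I (residue tp I {p})) \<and>
     (\<forall>L. tp L = Line \<longrightarrow>
        (\<exists>x. tp x = Point \<and> I x L) \<and> (\<exists>x. tp x = Plane \<and> I x L) \<and>
        (\<forall>x y. tp x = Point \<and> I x L \<and> tp y = Plane \<and> I y L \<longrightarrow> I x y))"

definition coplanar :: "('e \<Rightarrow> eltype) \<Rightarrow> ('e \<Rightarrow> 'e \<Rightarrow> bool) \<Rightarrow> 'e \<Rightarrow> 'e \<Rightarrow> bool" where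
  "coplanar tp I L M \<longleftrightarrow> (\<exists>\<xi>. tp \<xi> = Plane \<and> I L \<xi> \<and> I M \<xi>)"

definition unique_common_plane :: "('e \<Rightarrow> eltype) \<Rightarrow> ('e \<Rightarrow> 'e \<Rightarrow> bool) \<Rightarrow> bool" where
  "unique_common_plane tp I \<longleftrightarrow>
     (\<forall>p L M. tp p = Point \<and> tp L = Line \<and> tp M = Line \<and> L \<noteq> M \<and> I p L \<and> I p M \<and>
        coplanar tp I L M \<longrightarrow> (\<exists>!\<xi>. tp \<xi> = Plane \<and> I L \<xi> \<and> I M \<xi>))"

definition is_path :: "('e \<Rightarrow> 'e \<Rightarrow> bool) \<Rightarrow> 'e list \<Rightarrow> bool" where
  "is_path I xs \<longleftrightarrow> xs \<noteq> [] \<and> (\<forall>i. Suc i < length xs \<longrightarrow> I (xs ! i) (xs ! Suc i))"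

inductive elem_homotopy :: "('e \<Rightarrow> 'e \<Rightarrow> bool) \<Rightarrow> 'e list \<Rightarrow> 'e list \<Rightarrow> bool" for I where
  hom_back: "I x y \<Longrightarrow> elem_homotopy I (xs @ [x, y, x] @ ys) (xs @ [x] @ ys)"
| hom_flag: "is_flag I {x, y, z} \<Longrightarrow> elem_homotopy I (xs @ [x, y, z] @ ys) (xs @ [x, z] @ ys)"

definition homotopic :: "('e \<Rightarrow> 'e \<Rightarrow> bool) \<Rightarrow> 'e list \<Rightarrow> 'e list \<Rightarrow> bool" where
  "homotopic I = (symclp (elem_homotopy I))\<^sup>*\<^sup>*"

definition primitive_path :: "('e \<Rightarrow> eltype) \<Rightarrow> ('e \<Rightarrow> 'e \<Rightarrow> bool) \<Rightarrow> 'e list \<Rightarrow> bool" where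
  "primitive_path tp I \<alpha> \<longleftrightarrow> length \<alpha> = 5 \<and> \<alpha> ! 4 = \<alpha> ! 0 \<and> is_path I \<alpha> \<and>
     tp (\<alpha> ! 0) = Point \<and> tp (\<alpha> ! 1) = Line \<and> tp (\<alpha> ! 2) = Point \<and> tp (\<alpha> ! 3) = Line"

definition nondegenerate :: "'e list \<Rightarrow> bool" where
  "nondegenerate \<alpha> \<longleftrightarrow> \<alpha> ! 0 \<noteq> \<alpha> ! 2 \<and> \<alpha> ! 1 \<noteq> \<alpha> ! 3"

definition admissible :: "('e \<Rightarrow> eltype) \<Rightarrow> ('e \<Rightarrow> 'e \<Rightarrow> bool) \<Rightarrow> 'e \<Rightarrow> 'e list \<Rightarrow> bool" where
  "admissible tp I N \<alpha> \<longleftrightarrow> tp N = Line \<and> I N (\<alpha> ! 2) \<and>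
     coplanar tp I N (\<alpha> ! 1) \<and> coplanar tp I N (\<alpha> ! 3)"

definition plane_on :: "('e \<Rightarrow> eltype) \<Rightarrow> ('e \<Rightarrow> 'e \<Rightarrow> bool) \<Rightarrow> 'e \<Rightarrow> 'e \<Rightarrow> 'e" where
  "plane_on tp I L M = (THE \<xi>. tp \<xi> = Plane \<and> I L \<xi> \<and> I M \<xi>)"

definition line_through :: "('e \<Rightarrow> eltype) \<Rightarrow> ('e \<Rightarrow> 'e \<Rightarrow> bool) \<Rightarrow> 'e \<Rightarrow> 'e \<Rightarrow> 'e \<Rightarrow> 'e" where
  "line_through tp I \<xi> a b = (THE l. tp l = Line \<and> I l \<xi> \<and> I a l \<and> I b l)"

text \<open>Shift of alpha = (p,L,q,M,p) from q to r along N: (p,L',r,M',p).\<close>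
definition shift :: "('e \<Rightarrow> eltype) \<Rightarrow> ('e \<Rightarrow> 'e \<Rightarrow> bool) \<Rightarrow> 'e \<Rightarrow> 'e \<Rightarrow> 'e list \<Rightarrow> 'e list" where
  "shift tp I N r \<alpha> =
     (let p = \<alpha> ! 0; L = \<alpha> ! 1; M = \<alpha> ! 3;
          \<xi> = plane_on tp I N L; \<chi> = plane_on tp I N M
      in [p, line_through tp I \<xi> p r, r, line_through tp I \<chi> p r, p])"

end

theory Submission
  imports Defs
begin

context
  fixes tp :: "'e \<Rightarrow> eltype" and I :: "'e \<Rightarrow> 'e \<Rightarrow> bool"
  assumes C: "C3_geometry tp I"
begin

lemma Irefl: "I x x"
  using C by (simp add: C3_geometry_def incidence_geometry_def)

lemma Isym: "I x y \<Longrightarrow> I y x"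
  using C by (simp add: C3_geometry_def incidence_geometry_def)

lemma Ieq: "I x y \<Longrightarrow> tp x = tp y \<Longrightarrow> x = y"
  using C by (simp add: C3_geometry_def incidence_geometry_def)

lemma Cpl: "tp \<xi> = Plane \<Longrightarrow> projective_plane I {x. tp x = Point \<and> I x \<xi>} {x. tp x = Line \<and> I x \<xi>}"
  using C unfolding C3_geometry_def by (elim conjE) (erule allE, erule mp)

lemma Cln:
  assumes "tp L = Line"
  shows "\<forall>x y. tp x = Point \<and> I x L \<and> tp y = Plane \<and> I y L \<longrightarrow> I x y"
proof -
  have X: "\<forall>L. tp L = Line \<longrightarrow>
        (\<exists>x. tp x = Point \<and> I x L) \<and> (\<exists>x. tp x = Plane \<and> I x L) \<and>
        (\<forall>x y. tp x = Point \<and> I x L \<and> tp y = Plane \<and> I y L \<longrightarrow> I x y)"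
    using C unfolding C3_geometry_def by (elim conjE) assumption
  have "(\<exists>x. tp x = Point \<and> I x L) \<and> (\<exists>x. tp x = Plane \<and> I x L) \<and>
        (\<forall>x y. tp x = Point \<and> I x L \<and> tp y = Plane \<and> I y L \<longrightarrow> I x y)"
    using mp[OF spec[OF X, of L] assms] .
  then show ?thesis by (elim conjE)
qed

lemma Ipl: "tp x = Point \<Longrightarrow> tp L = Line \<Longrightarrow> I x L \<Longrightarrow> tp y = Plane \<Longrightarrow> I L y \<Longrightarrow> I x y"
proof -
  assume a: "tp x = Point" "tp L = Line" "I x L" "tp y = Plane" "I L y"
  have "tp x = Point \<and> I x L \<and> tp y = Plane \<and> I y L \<longrightarrow> I x y"
    using spec[OF spec[OF Cln[OF a(2)], of x], of y] .
  then show "I x y" using a Isym[OF a(5)] by simp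
qed

lemma pp1:
  assumes "tp \<xi> = Plane" "a \<in> {x. tp x = Point \<and> I x \<xi>}" "b \<in> {x. tp x = Point \<and> I x \<xi>}" "a \<noteq> b"
  shows "\<exists>!l. l \<in> {x. tp x = Line \<and> I x \<xi>} \<and> I a l \<and> I b l"
proof -
  have "projective_plane I {x. tp x = Point \<and> I x \<xi>} {x. tp x = Line \<and> I x \<xi>}"
    using Cpl assms(1) .
  then have X: "\<forall>a\<in>{x. tp x = Point \<and> I x \<xi>}. \<forall>b\<in>{x. tp x = Point \<and> I x \<xi>}. a \<noteq> b \<longrightarrow>
     (\<exists>!l. l \<in> {x. tp x = Line \<and> I x \<xi>} \<and> I a l \<and> I b l)"
    unfolding projective_plane_def by (rule conjunct1)
  show ?thesis by (rule mp[OF bspec[OF bspec[OF X assms(2)] assms(3)] assms(4)])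
qed

lemma uline:
  assumes "tp \<xi> = Plane" "tp a = Point" "tp b = Point" "I a \<xi>" "I b \<xi>" "a \<noteq> b"
    "tp l = Line" "I l \<xi>" "I a l" "I b l" "tp l' = Line" "I l' \<xi>" "I a l'" "I b l'"
  shows "l = l'"
proof -
  have "\<exists>!l. l \<in> {x. tp x = Line \<and> I x \<xi>} \<and> I a l \<and> I b l"
    using pp1[of \<xi> a b] assms(1-6) by simp
  note ex = this
  have Pl: "l \<in> {x. tp x = Line \<and> I x \<xi>} \<and> I a l \<and> I b l" using assms(7-10) by simp
  have Pl': "l' \<in> {x. tp x = Line \<and> I x \<xi>} \<and> I a l' \<and> I b l'" using assms(11-14) by simp
  show ?thesis using the1_equality[OF ex Pl] the1_equality[OF ex Pl'] by simp
qed

lemma line_through_eq: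
  assumes "tp \<xi> = Plane" "tp a = Point" "tp b = Point" "I a \<xi>" "I b \<xi>" "a \<noteq> b"
    "tp l = Line" "I l \<xi>" "I a l" "I b l"
  shows "line_through tp I \<xi> a b = l"
  unfolding line_through_def
  apply (rule the_equality)
  using assms(7-10) apply simp
  using uline[OF assms] by blast

lemma line_through_ex:
  assumes "tp \<xi> = Plane" "tp a = Point" "tp b = Point" "I a \<xi>" "I b \<xi>" "a \<noteq> b"
  shows "\<exists>l. tp l = Line \<and> I l \<xi> \<and> I a l \<and> I b l"
proof -
  have "\<exists>!l. l \<in> {x. tp x = Line \<and> I x \<xi>} \<and> I a l \<and> I b l"
    using pp1[of \<xi> a b] assms(1-6) by simp
  then show ?thesis by blast
qed

lemma plane_on_eq:
  assumes U: "unique_common_plane tp I"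
    and "tp x = Point" "tp A = Line" "tp B = Line" "A \<noteq> B" "I x A" "I x B"
    "tp \<xi> = Plane" "I A \<xi>" "I B \<xi>"
  shows "plane_on tp I A B = \<xi>"
proof -
  have "coplanar tp I A B" using assms unfolding coplanar_def by blast
  then have ex1: "\<exists>!\<xi>. tp \<xi> = Plane \<and> I A \<xi> \<and> I B \<xi>"
    using U assms unfolding unique_common_plane_def by blast
  show ?thesis unfolding plane_on_def
    by (rule the1_equality[OF ex1]) (use assms in simp)
qed

lemma hom_step: "elem_homotopy I a b \<Longrightarrow> homotopic I a b"
  unfolding homotopic_def by (simp add: r_into_rtranclp symclpI(1))

lemma hom_step': "elem_homotopy I b a \<Longrightarrow> homotopic I a b"
  unfolding homotopic_def by (simp add: r_into_rtranclp symclpI(2))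

lemma hom_trans: "homotopic I a b \<Longrightarrow> homotopic I b c \<Longrightarrow> homotopic I a c"
  unfolding homotopic_def by simp

lemma hom_sym: "homotopic I a b \<Longrightarrow> homotopic I b a"
  unfolding homotopic_def
proof (induction rule: rtranclp_induct)
  case base then show ?case by simp
next
  case (step y z)
  then have "(symclp (elem_homotopy I))\<^sup>*\<^sup>* z y"
    by (metis r_into_rtranclp symclp_def sup2CI)
  then show ?case using step by simp
qed

lemma flag3: "I x y \<Longrightarrow> I y z \<Longrightarrow> I x z \<Longrightarrow> is_flag I {x,y,z}"
  unfolding is_flag_def using Irefl Isym by blast

lemma key_hom:
  assumes "I p L" "I L \<xi>" "I q L" "I \<xi> q" "I p \<xi>" "I q M" "I M \<chi>" "I \<chi> p" "I q \<chi>"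
    "I N \<xi>" "I N \<chi>" "I q N" "I M p"
  shows "homotopic I [p,L,q,M,p] [p,\<xi>,N,\<chi>,p]"
proof -
  have s1: "homotopic I [p,L,q,M,p] [p,L,\<xi>,q,M,p]"
    apply (rule hom_step')
    using hom_flag[OF flag3[of L \<xi> q], of "[p]" "[M,p]"] assms Isym by simp
  have s2: "homotopic I [p,L,\<xi>,q,M,p] [p,\<xi>,q,M,p]"
    apply (rule hom_step)
    using hom_flag[OF flag3[of p L \<xi>], of "[]" "[q,M,p]"] assms Isym by simp
  have s3: "homotopic I [p,\<xi>,q,M,p] [p,\<xi>,q,\<chi>,M,p]"
    apply (rule hom_step')
    using hom_flag[OF flag3[of q \<chi> M], of "[p,\<xi>]" "[p]"] assms Isym by simp
  have s4: "homotopic I [p,\<xi>,q,\<chi>,M,p] [p,\<xi>,q,\<chi>,p]"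
    apply (rule hom_step)
    using hom_flag[OF flag3[of \<chi> M p], of "[p,\<xi>,q]" "[]"] assms Isym by simp
  have s5: "homotopic I [p,\<xi>,q,\<chi>,p] [p,\<xi>,q,N,\<chi>,p]"
    apply (rule hom_step')
    using hom_flag[OF flag3[of q N \<chi>], of "[p,\<xi>]" "[p]"] assms Isym by simp
  have s6: "homotopic I [p,\<xi>,q,N,\<chi>,p] [p,\<xi>,N,\<chi>,p]"
    apply (rule hom_step)
    using hom_flag[OF flag3[of \<xi> q N], of "[p]" "[\<chi>,p]"] assms Isym by simp
  show ?thesis using hom_trans[OF s1 hom_trans[OF s2 hom_trans[OF s3 hom_trans[OF s4 hom_trans[OF s5 s6]]]]] .
qed

end

theorem mainTheorem10:
  fixes tp :: "'e \<Rightarrow> eltype" and I :: "'e \<Rightarrow> 'e \<Rightarrow> bool"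
    and \<alpha> :: "'e list" and N r :: 'e
  assumes "C3_geometry tp I"
    and "unique_common_plane tp I"
    and "primitive_path tp I \<alpha>" and "nondegenerate \<alpha>"
    and "admissible tp I N \<alpha>"
    and "tp r = Point" and "I r N"
  shows "(shift tp I N r \<alpha> = \<alpha> \<longleftrightarrow> r = \<alpha> ! 2)
    \<and> (primitive_path tp I (shift tp I N r \<alpha>) \<and> nondegenerate (shift tp I N r \<alpha>)
        \<and> admissible tp I N (shift tp I N r \<alpha>))
    \<and> shift tp I N (\<alpha> ! 2) (shift tp I N r \<alpha>) = \<alpha>
    \<and> homotopic I \<alpha> (shift tp I N r \<alpha>)"
proof -
  note C = assms(1)
  have len: "length \<alpha> = 5" using assms(3) unfolding primitive_path_def by simp
  define p L q M where "p = \<alpha>!0" "L = \<alpha>!1" "q = \<alpha>!2" "M = \<alpha>!3"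
  obtain a0 a1 a2 a3 a4 where a5: "\<alpha> = [a0,a1,a2,a3,a4]"
    using len by (auto simp: length_Suc_conv numeral_eq_Suc)
  have aeq: "\<alpha> = [p,L,q,M,p]"
    using a5 assms(3) unfolding p_L_q_M_def primitive_path_def by simp
  have pp: "is_path I [p,L,q,M,p]" "tp p = Point" "tp L = Line" "tp q = Point" "tp M = Line"
    using assms(3) unfolding aeq primitive_path_def by auto
  have ip: "\<And>i. i < 4 \<Longrightarrow> I ([p,L,q,M,p]!i) ([p,L,q,M,p]!Suc i)"
    using pp(1) unfolding is_path_def by simp
  have inc: "I p L" "I L q" "I q M" "I M p"
    using ip[of 0] ip[of 1] ip[of 2] ip[of 3] by (simp_all add: numeral_eq_Suc)
  have nd: "p \<noteq> q" "L \<noteq> M" using assms(4) unfolding aeq nondegenerate_def by auto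
  have adm: "tp N = Line" "I N q" "coplanar tp I N L" "coplanar tp I N M"
    using assms(5) unfolding aeq admissible_def by auto
  obtain \<xi> where xi: "tp \<xi> = Plane" "I N \<xi>" "I L \<xi>" using adm unfolding coplanar_def by blast
  obtain \<chi> where chi: "tp \<chi> = Plane" "I N \<chi>" "I M \<chi>" using adm unfolding coplanar_def by blast
  note Is = Isym[OF C]
  have pxi: "I p \<xi>" using Ipl[OF C pp(2) pp(3) inc(1) xi(1) xi(3)] .
  have qxi: "I q \<xi>" using Ipl[OF C pp(4) pp(3) Is[OF inc(2)] xi(1) xi(3)] .
  have pchi: "I p \<chi>" using Ipl[OF C pp(2) pp(5) Is[OF inc(4)] chi(1) chi(3)] .
  have qchi: "I q \<chi>" using Ipl[OF C pp(4) pp(5) inc(3) chi(1) chi(3)] .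
  have rxi: "I r \<xi>" using Ipl[OF C assms(6) adm(1) assms(7) xi(1) xi(2)] .
  have rchi: "I r \<chi>" using Ipl[OF C assms(6) adm(1) assms(7) chi(1) chi(2)] .
  have LM_nc: "\<not> coplanar tp I L M"
  proof
    assume "coplanar tp I L M"
    then obtain \<eta> where e: "tp \<eta> = Plane" "I L \<eta>" "I M \<eta>" unfolding coplanar_def by blast
    have "I p \<eta>" "I q \<eta>" using Ipl[OF C pp(2) pp(3) inc(1) e(1) e(2)] Ipl[OF C pp(4) pp(3) Is[OF inc(2)] e(1) e(2)] by auto
    then show False using uline[OF C e(1) pp(2) pp(4) _ _ nd(1) pp(3) e(2) inc(1) Is[OF inc(2)]
      pp(5) e(3) Is[OF inc(4)] inc(3)] nd(2) by blast
  qed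
  have NL: "N \<noteq> L" using LM_nc adm(4) by auto
  have NM: "N \<noteq> M" using LM_nc adm(3) unfolding coplanar_def by blast
  have xichi: "\<xi> \<noteq> \<chi>" using LM_nc xi chi unfolding coplanar_def by blast
  have pN: "\<not> I p N"
  proof
    assume "I p N"
    then show False using uline[OF C xi(1) pp(2) pp(4) pxi qxi nd(1) adm(1) xi(2) \<open>I p N\<close> Is[OF adm(2)]
      pp(3) xi(3) inc(1) Is[OF inc(2)]] NL by blast
  qed
  have pr: "p \<noteq> r" using pN assms(7) by blast
  have plxi: "plane_on tp I N L = \<xi>"
    using plane_on_eq[OF C assms(2) pp(4) adm(1) pp(3) NL Is[OF adm(2)] Is[OF inc(2)] xi] .
  have plchi: "plane_on tp I N M = \<chi>"
    using plane_on_eq[OF C assms(2) pp(4) adm(1) pp(5) NM Is[OF adm(2)] inc(3) chi] .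
  obtain L' where L': "tp L' = Line" "I L' \<xi>" "I p L'" "I r L'"
    using line_through_ex[OF C xi(1) pp(2) assms(6) pxi rxi pr] by blast
  obtain M' where M': "tp M' = Line" "I M' \<chi>" "I p M'" "I r M'"
    using line_through_ex[OF C chi(1) pp(2) assms(6) pchi rchi pr] by blast
  have ltL: "line_through tp I \<xi> p r = L'" using line_through_eq[OF C xi(1) pp(2) assms(6) pxi rxi pr L'] .
  have ltM: "line_through tp I \<chi> p r = M'" using line_through_eq[OF C chi(1) pp(2) assms(6) pchi rchi pr M'] .
  have sh: "shift tp I N r \<alpha> = [p,L',r,M',p]"
    unfolding aeq shift_def Let_def using plxi plchi ltL ltM by simp
  have NL': "N \<noteq> L'" using pN L' by blast
  have NM': "N \<noteq> M'" using pN M' by blast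
  have L'M': "L' \<noteq> M'"
  proof
    assume "L' = M'"
    then have "I L' \<chi>" using M' by simp
    have "plane_on tp I N L' = \<xi>"
      using plane_on_eq[OF C assms(2) assms(6) adm(1) L'(1) NL' assms(7) L'(4) xi(1,2) L'(2)] .
    moreover have "plane_on tp I N L' = \<chi>"
      using plane_on_eq[OF C assms(2) assms(6) adm(1) L'(1) NL' assms(7) L'(4) chi(1,2) \<open>I L' \<chi>\<close>] .
    ultimately show False using xichi by simp
  qed
  have plxi': "plane_on tp I N L' = \<xi>"
    using plane_on_eq[OF C assms(2) assms(6) adm(1) L'(1) NL' assms(7) L'(4) xi(1,2) L'(2)] .
  have plchi': "plane_on tp I N M' = \<chi>"
    using plane_on_eq[OF C assms(2) assms(6) adm(1) M'(1) NM' assms(7) M'(4) chi(1,2) M'(2)] .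
  have ltL2: "line_through tp I \<xi> p q = L"
    using line_through_eq[OF C xi(1) pp(2) pp(4) pxi qxi nd(1) pp(3) xi(3) inc(1) Is[OF inc(2)]] .
  have ltM2: "line_through tp I \<chi> p q = M"
    using line_through_eq[OF C chi(1) pp(2) pp(4) pchi qchi nd(1) pp(5) chi(3) Is[OF inc(4)] inc(3)] .
  have bk: "shift tp I N q [p,L',r,M',p] = [p,L,q,M,p]"
    unfolding shift_def Let_def using plxi' plchi' ltL2 ltM2 by simp
  have P1: "shift tp I N r \<alpha> = \<alpha> \<longleftrightarrow> r = \<alpha> ! 2"
  proof
    assume "shift tp I N r \<alpha> = \<alpha>"
    then show "r = \<alpha> ! 2" unfolding sh by (simp add: aeq)
  next
    assume "r = \<alpha> ! 2"
    then have "r = q" by (simp add: aeq)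
    then have "L' = L \<and> M' = M" 
      using line_through_eq[OF C xi(1) pp(2) pp(4) pxi qxi nd(1) pp(3) xi(3) inc(1) Is[OF inc(2)]]
        line_through_eq[OF C chi(1) pp(2) pp(4) pchi qchi nd(1) pp(5) chi(3) Is[OF inc(4)] inc(3)]
        ltL ltM by simp
    then show "shift tp I N r \<alpha> = \<alpha>" unfolding sh using aeq \<open>r = q\<close> by simp
  qed
  have P2: "primitive_path tp I [p,L',r,M',p] \<and> nondegenerate [p,L',r,M',p]
        \<and> admissible tp I N [p,L',r,M',p]"
  proof -
    have i4: "I p L'" "I L' r" "I r M'" "I M' p" using L'(3) Is[OF L'(4)] M'(4) Is[OF M'(3)] by auto
    have "is_path I [p,L',r,M',p]" unfolding is_path_def
    proof (intro conjI allI impI)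
      fix i assume "Suc i < length [p,L',r,M',p]"
      then have "i = 0 \<or> i = 1 \<or> i = 2 \<or> i = 3" by auto
      then show "I ([p,L',r,M',p] ! i) ([p,L',r,M',p] ! Suc i)" using i4 by auto
    qed simp
    moreover have "coplanar tp I N L'" "coplanar tp I N M'"
      unfolding coplanar_def using xi(1,2) L'(2) chi(1,2) M'(2) by blast+
    ultimately show ?thesis
      unfolding primitive_path_def nondegenerate_def admissible_def
      using pp L' M' assms(6) pr L'M' adm(1) Is[OF assms(7)] by simp
  qed
  have h1: "homotopic I [p,L,q,M,p] [p,\<xi>,N,\<chi>,p]"
    by (rule key_hom[OF C inc(1) xi(3) Is[OF inc(2)] Is[OF qxi] pxi inc(3) chi(3) Is[OF pchi] qchi
      xi(2) chi(2) Is[OF adm(2)] inc(4)])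
  have h2: "homotopic I [p,L',r,M',p] [p,\<xi>,N,\<chi>,p]"
    by (rule key_hom[OF C L'(3) L'(2) L'(4) Is[OF rxi] pxi M'(4) M'(2) Is[OF pchi] rchi
      xi(2) chi(2) assms(7) Is[OF M'(3)]])
  have P4: "homotopic I \<alpha> [p,L',r,M',p]"
    unfolding aeq using hom_trans[OF C h1 hom_sym[OF C h2]] .
  show ?thesis using P1 P2 P4 bk unfolding sh by (simp add: aeq)
qed

end
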